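(* There is an absolute constant $K$ such that the following holds. Let $X$ be a real symmetric matrix with $\rho(X)<1$, let $p\in[-1,1]$ and $\epsilon>0$. Then there exists a real polynomial $T$ of degree $t\le K\max(1,\log(1/\epsilon))$ such that $$(I-X)^p\approx_\epsilon T\!\left(I+\tfrac12X\right)\left(I-\tfrac12X-\tfrac12X^2\right)^{p}T\!\left(I+\tfrac12X\right).$$
   Context: $\rho(X)$ is the spectral radius. For symmetric $A,B$, $A\approx_\epsilon B$ means $e^{\epsilon}A\succeq B\succeq e^{-\epsilon}A$ in the Loewner order. For symmetric positive definite $M=\sum_i\lambda_iu_iu_i^\top$, $M^p=\sum_i\lambda_i^pu_iu_i^\top$. A polynomial applied to a symmetric matrix is evaluated in the usual way. *)

theory Defs
  imports "Jordan_Normal_Form.Spectral_Radius"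
begin

definition poly_mat :: "real poly \<Rightarrow> real mat \<Rightarrow> real mat" where
  "poly_mat T M = (let n = dim_row M in
     foldr (\<lambda>c A. c \<cdot>\<^sub>m 1\<^sub>m n + M * A) (coeffs T) (0\<^sub>m n n))"

definition mat_powr :: "real mat \<Rightarrow> real \<Rightarrow> real mat" where
  "mat_powr M p = (let n = dim_row M in
     (SOME R. \<exists>U lam. U \<in> carrier_mat n n \<and> transpose_mat U * U = 1\<^sub>m n \<and>
        M = U * mat_diag n lam * transpose_mat U \<and>
        R = U * mat_diag n (\<lambda>i. lam i powr p) * transpose_mat U))"

definition loewner_ge :: "real mat \<Rightarrow> real mat \<Rightarrow> bool" where
  "loewner_ge A B = (\<forall>v \<in> carrier_vec (dim_row A). v \<bullet> ((A - B) *\<^sub>v v) \<ge> 0)"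

definition loewner_approx :: "real \<Rightarrow> real mat \<Rightarrow> real mat \<Rightarrow> bool" where
  "loewner_approx eps A B = (loewner_ge (exp eps \<cdot>\<^sub>m A) B \<and> loewner_ge B (exp (- eps) \<cdot>\<^sub>m A))"

end

theory Submission
  imports Defs "Jordan_Normal_Form.Schur_Decomposition" "HOL-Analysis.Generalised_Binomial_Theorem"
begin


lemma sym_real_eigen:
  fixes A :: "real mat"
  assumes A: "A \<in> carrier_mat n n" and sym: "transpose_mat A = A" and n: "n > 0"
  shows "\<exists>e v. v \<in> carrier_vec n \<and> v \<noteq> 0\<^sub>v n \<and> A *\<^sub>v v = e \<cdot>\<^sub>v v"
proof -
  define C where "C = map_mat complex_of_real A"
  have C: "C \<in> carrier_mat n n" using A unfolding C_def by auto
  have Csym: "\<And>i j. i < n \<Longrightarrow> j < n \<Longrightarrow> C $$ (i,j) = C $$ (j,i)"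
    using sym A unfolding C_def by (metis carrier_matD index_map_mat index_transpose_mat)
  have Creal: "\<And>i j. i < n \<Longrightarrow> j < n \<Longrightarrow> cnj (C $$ (i,j)) = C $$ (i,j)"
    using A unfolding C_def by auto
  obtain l where "l \<in> spectrum C" using spectrum_non_empty[OF C n] by auto
  hence "eigenvalue C l" unfolding spectrum_def by auto
  then obtain z where z: "z \<in> carrier_vec n" "z \<noteq> 0\<^sub>v n" "C *\<^sub>v z = l \<cdot>\<^sub>v z"
    unfolding eigenvalue_def eigenvector_def using C by auto
  define S where "S = (\<Sum>i<n. \<Sum>j<n. cnj (z $ i) * C $$ (i,j) * z $ j)"
  define r where "r = (\<Sum>i<n. cnj (z $ i) * z $ i)"
  have zi: "\<And>i. i < n \<Longrightarrow> (\<Sum>j<n. C $$ (i,j) * z $ j) = l * z $ i"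
  proof -
    fix i assume i: "i < n"
    have "(C *\<^sub>v z) $ i = l * z $ i" using z i by auto
    moreover have "(C *\<^sub>v z) $ i = (\<Sum>j<n. C $$ (i,j) * z $ j)"
      using C z(1) i by (auto simp: scalar_prod_def lessThan_atLeast0)
    ultimately show "(\<Sum>j<n. C $$ (i,j) * z $ j) = l * z $ i" by simp
  qed
  have "S = (\<Sum>i<n. cnj (z $ i) * (\<Sum>j<n. C $$ (i,j) * z $ j))"
    unfolding S_def by (simp add: sum_distrib_left mult.assoc)
  also have "\<dots> = l * r" unfolding r_def using zi by (simp add: sum_distrib_left algebra_simps)
  finally have Slr: "S = l * r" .
  have "cnj S = (\<Sum>i<n. \<Sum>j<n. cnj (cnj (z $ i) * C $$ (i,j) * z $ j))"
    unfolding S_def by (simp only: cnj_sum)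
  also have "\<dots> = (\<Sum>i<n. \<Sum>j<n. z $ i * C $$ (i,j) * cnj (z $ j))"
    by (intro sum.cong refl) (simp only: complex_cnj_mult complex_cnj_cnj Creal lessThan_iff)
  also have "\<dots> = (\<Sum>j<n. \<Sum>i<n. z $ i * C $$ (i,j) * cnj (z $ j))" by (rule sum.swap)
  also have "\<dots> = S" unfolding S_def
    by (intro sum.cong refl, simp add: Csym mult.commute mult.left_commute)
  finally have cS: "cnj S = S" .
  have rreal: "r = of_real (\<Sum>i<n. (cmod (z $ i))^2)"
    unfolding r_def of_real_sum by (intro sum.cong refl) (metis complex_norm_square mult.commute)
  have "\<exists>i<n. z $ i \<noteq> 0"
  proof (rule ccontr)
    assume "\<not> ?thesis" hence "z = 0\<^sub>v n" using z(1) by (intro eq_vecI) auto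
    thus False using z(2) by simp
  qed
  then obtain i0 where i0: "i0 < n" "z $ i0 \<noteq> 0" by auto
  have "(\<Sum>i<n. (cmod (z $ i))^2) \<ge> (cmod (z $ i0))^2"
    using i0 by (intro member_le_sum) auto
  moreover have "(cmod (z $ i0))^2 > 0" using i0 by auto
  ultimately have rpos: "(\<Sum>i<n. (cmod (z $ i))^2) > 0" by linarith
  have "cnj l * r = l * r" using cS Slr rreal by (metis complex_cnj_complex_of_real complex_cnj_mult)
  moreover have "r \<noteq> 0" unfolding rreal using rpos by (metis of_real_eq_0_iff less_irrefl)
  ultimately have lreal: "cnj l = l" by simp
  define e where "e = Re l"
  have "Im l = 0" using arg_cong[OF lreal, of Im] by simp
  hence le: "l = of_real e" unfolding e_def by (simp add: complex_eq_iff)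
  have "poly (char_poly C) l = 0" using \<open>eigenvalue C l\<close> eigenvalue_root_char_poly[OF C] by auto
  moreover have "char_poly C = map_poly of_real (char_poly A)"
    unfolding C_def using of_real_hom.char_poly_hom[OF A] by simp
  ultimately have "poly (char_poly A) e = 0" unfolding le by simp
  hence "eigenvalue A e" using eigenvalue_root_char_poly[OF A] by auto
  then obtain v where "eigenvector A v e" unfolding eigenvalue_def by auto
  thus ?thesis unfolding eigenvector_def using A by auto
qed




lemma orthonormal_completion:
  fixes v :: "real Matrix.vec"
  assumes v: "v \<in> carrier_vec n" and v1: "v \<bullet> v = 1"
  shows "\<exists>W. W \<in> carrier_mat n n \<and> transpose_mat W * W = 1\<^sub>m n \<and> col W 0 = v"
proof -
  have v0: "v \<noteq> 0\<^sub>v n" using v1 v by auto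
  have n: "n \<noteq> 0" using v v0 by (auto intro!: eq_vecI)
  interpret cof_vec_space n "TYPE(real)" .
  define b where "b = basis_completion v"
  define ws where "ws = gram_schmidt n b"
  from basis_completion[OF v v0, folded b_def]
  have dist_b: "distinct b" 
    and indep: "\<not> lin_dep (set b)" and b: "set b \<subseteq> carrier_vec n" and hdb: "hd b = v" 
    and len_b: "length b = n" by auto
  from hdb len_b n obtain vs where bv: "b = v # vs" by (cases b, auto)
  from gram_schmidt_result[OF b dist_b indep refl, folded ws_def]
  have ws: "set ws \<subseteq> carrier_vec n" "corthogonal ws" "length ws = n" 
    by (auto simp: len_b)
  from gram_schmidt_hd[OF v, of vs, folded bv] have hdws: "hd ws = v" unfolding ws_def .
  define us where "us = map (\<lambda>w. (1 / sqrt (w \<bullet> w)) \<cdot>\<^sub>v w) ws"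
  have lus: "length us = n" using ws unfolding us_def by simp
  have wsc: "\<And>i. i < n \<Longrightarrow> ws ! i \<in> carrier_vec n" using ws by auto
  have orth: "\<And>i j. i < n \<Longrightarrow> j < n \<Longrightarrow> ws ! i \<bullet> ws ! j = 0 \<longleftrightarrow> i \<noteq> j"
    using ws(2) ws(3) unfolding corthogonal_def by auto
  have pos: "\<And>i. i < n \<Longrightarrow> ws ! i \<bullet> ws ! i > 0"
  proof -
    fix i assume i: "i < n"
    have "ws ! i \<bullet> ws ! i \<ge> 0" using wsc[OF i]
      by (metis conjugate_square_ge_0_vec vec_conjugate_real)
    thus "ws ! i \<bullet> ws ! i > 0" using orth[OF i i] by auto
  qed
  have usc: "\<And>i. i < n \<Longrightarrow> us ! i \<in> carrier_vec n" using wsc ws(3) unfolding us_def by auto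
  have usi: "\<And>i j. i < n \<Longrightarrow> j < n \<Longrightarrow> us ! i \<bullet> us ! j = (if i = j then 1 else 0)"
  proof -
    fix i j assume i: "i < n" and j: "j < n"
    have "us ! i \<bullet> us ! j = (1 / sqrt (ws ! i \<bullet> ws ! i)) * (1 / sqrt (ws ! j \<bullet> ws ! j)) * (ws ! i \<bullet> ws ! j)"
      unfolding us_def using i j ws(3) wsc[OF i] wsc[OF j] by simp
    thus "us ! i \<bullet> us ! j = (if i = j then 1 else 0)"
      using orth[OF i j] pos[OF i] by (auto simp: real_sqrt_mult[symmetric])
  qed
  define W where "W = mat_of_cols n us"
  have W: "W \<in> carrier_mat n n" unfolding W_def using lus by auto
  have colW: "\<And>i. i < n \<Longrightarrow> col W i = us ! i" unfolding W_def using lus usc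
    by (simp add: col_mat_of_cols)
  have "transpose_mat W * W = 1\<^sub>m n"
  proof (rule eq_matI)
    fix i j assume i: "i < dim_row (1\<^sub>m n)" and j: "j < dim_col (1\<^sub>m n)"
    hence i': "i < n" and j': "j < n" by auto
    have "(transpose_mat W * W) $$ (i,j) = Matrix.row (transpose_mat W) i \<bullet> col W j"
      using W i' j' by simp
    also have "\<dots> = col W i \<bullet> col W j" using W i' by simp
    finally show "(transpose_mat W * W) $$ (i,j) = 1\<^sub>m n $$ (i,j)"
      using i' j' colW usi by simp
  qed (use W in auto)
  moreover have "col W 0 = v"
  proof -
    have "ws ! 0 = v" using hdws ws(3) n by (cases ws) auto
    hence "us ! 0 = v" unfolding us_def using n ws(3) v1 by simp
    thus ?thesis using colW n by auto
  qed
  ultimately show ?thesis using W by auto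
qed




lemma sq_mult_carrier: "A \<in> carrier_mat n n \<Longrightarrow> B \<in> carrier_mat n n \<Longrightarrow> A * B \<in> carrier_mat n n"
  by auto
lemma sq_assoc: "A \<in> carrier_mat n n \<Longrightarrow> B \<in> carrier_mat n n \<Longrightarrow> C \<in> carrier_mat n n \<Longrightarrow>
  A * B * C = A * (B * C)"
  by (rule assoc_mult_mat) auto

lemma spectral_thm:
  fixes A :: "real mat"
  assumes "A \<in> carrier_mat n n" and "transpose_mat A = A"
  shows "\<exists>U lam. U \<in> carrier_mat n n \<and> transpose_mat U * U = 1\<^sub>m n \<and>
            A = U * mat_diag n lam * transpose_mat U"
  using assms
proof (induction n arbitrary: A)
  case 0
  show ?case
    by (rule exI[of _ "1\<^sub>m 0"], rule exI[of _ "\<lambda>_. 0"]) (use 0 in \<open>auto intro!: eq_matI\<close>)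
next
  case (Suc m)
  note A = Suc.prems(1) and sym = Suc.prems(2)
  obtain e v0 where v0: "v0 \<in> carrier_vec (Suc m)" "v0 \<noteq> 0\<^sub>v (Suc m)" "A *\<^sub>v v0 = e \<cdot>\<^sub>v v0"
    using sym_real_eigen[OF A sym] by auto
  have "v0 \<bullet> v0 \<ge> 0" using v0(1) by (metis conjugate_square_ge_0_vec vec_conjugate_real)
  moreover have "v0 \<bullet> v0 \<noteq> 0" using v0(1,2)
    by (metis conjugate_square_eq_0_vec vec_conjugate_real)
  ultimately have pv: "v0 \<bullet> v0 > 0" by auto
  define v where "v = (1 / sqrt (v0 \<bullet> v0)) \<cdot>\<^sub>v v0"
  have v: "v \<in> carrier_vec (Suc m)" unfolding v_def using v0 by auto
  have v1: "v \<bullet> v = 1" unfolding v_def using v0(1) pv by (simp add: real_sqrt_mult[symmetric])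
  have Av: "A *\<^sub>v v = e \<cdot>\<^sub>v v" unfolding v_def using v0 A
    by (simp add: mult_mat_vec smult_smult_assoc mult.commute)
  obtain W where W: "W \<in> carrier_mat (Suc m) (Suc m)" "transpose_mat W * W = 1\<^sub>m (Suc m)"
    "col W 0 = v" using orthonormal_completion[OF v v1] by auto
  have WT: "transpose_mat W \<in> carrier_mat (Suc m) (Suc m)" using W by auto
  have WWT: "W * transpose_mat W = 1\<^sub>m (Suc m)"
    using mat_mult_left_right_inverse[OF WT W(1) W(2)] .
  define A' where "A' = transpose_mat W * A * W"
  have A'c: "A' \<in> carrier_mat (Suc m) (Suc m)" unfolding A'_def using W A by auto
  have A'sym: "transpose_mat A' = A'"
  proof -
    have AW: "A * W \<in> carrier_mat (Suc m) (Suc m)" using A W by auto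
    have "A' = transpose_mat W * (A * W)" unfolding A'_def
      using W A by (simp add: assoc_mult_mat[of _ "Suc m" "Suc m" _ "Suc m" _ "Suc m"])
    hence "transpose_mat A' = transpose_mat (A * W) * transpose_mat (transpose_mat W)"
      using transpose_mult[OF WT AW] by simp
    also have "\<dots> = (transpose_mat W * transpose_mat A) * W"
      using transpose_mult[OF A W(1)] by simp
    also have "\<dots> = A'" unfolding A'_def sym ..
    finally show ?thesis .
  qed
  have WtW: "\<And>i j. i < Suc m \<Longrightarrow> j < Suc m \<Longrightarrow> col W i \<bullet> col W j = (if i = j then 1 else 0)"
  proof -
    fix i j assume i: "i < Suc m" and j: "j < Suc m"
    have "col W i \<bullet> col W j = (transpose_mat W * W) $$ (i,j)" using W(1) i j by simp
    also have "\<dots> = (if i = j then 1 else 0)" unfolding W(2) using i j by simp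
    finally show "col W i \<bullet> col W j = (if i = j then 1 else 0)" .
  qed
  have A'col: "\<And>i. i < Suc m \<Longrightarrow> A' $$ (i,0) = (if i = 0 then e else 0)"
  proof -
    fix i assume i: "i < Suc m"
    have "A' $$ (i,0) = (transpose_mat W * (A * W)) $$ (i,0)" unfolding A'_def
      using W A by (simp add: assoc_mult_mat[of _ "Suc m" "Suc m" _ "Suc m" _ "Suc m"])
    also have "\<dots> = col W i \<bullet> col (A * W) 0" using W A i by simp
    also have "col (A * W) 0 = A *\<^sub>v col W 0" using col_mult2[OF A W(1), of 0] by simp
    also have "\<dots> = e \<cdot>\<^sub>v col W 0" using Av W(3) by simp
    also have "col W i \<bullet> (e \<cdot>\<^sub>v col W 0) = e * (col W i \<bullet> col W 0)"
      using W(1) i by (intro scalar_prod_smult_right) auto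
    finally show "A' $$ (i,0) = (if i = 0 then e else 0)" using WtW[OF i, of 0] by simp
  qed
  have A'row: "\<And>j. j < Suc m \<Longrightarrow> A' $$ (0,j) = (if j = 0 then e else 0)"
  proof -
    fix j assume j: "j < Suc m"
    have "A' $$ (0,j) = transpose_mat A' $$ (j,0)" using A'c j by simp
    thus "A' $$ (0,j) = (if j = 0 then e else 0)" using A'sym A'col[OF j] by simp
  qed
  define A3 where "A3 = Matrix.mat m m (\<lambda>(i,j). A' $$ (Suc i, Suc j))"
  have A3: "A3 \<in> carrier_mat m m" unfolding A3_def by simp
  have A3sym: "transpose_mat A3 = A3"
  proof (rule eq_matI)
    fix i j assume "i < dim_row A3" "j < dim_col A3"
    hence i: "i < m" and j: "j < m" using A3 by auto
    have "A' $$ (Suc j, Suc i) = transpose_mat A' $$ (Suc i, Suc j)" using A'c i j by simp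
    thus "transpose_mat A3 $$ (i,j) = A3 $$ (i,j)" unfolding A3_def using i j A'sym by simp
  qed (use A3 in auto)
  obtain V lam3 where V: "V \<in> carrier_mat m m" "transpose_mat V * V = 1\<^sub>m m"
     "A3 = V * mat_diag m lam3 * transpose_mat V"
    using Suc.IH[OF A3 A3sym] by auto
  define P where "P = four_block_mat (1\<^sub>m 1) (0\<^sub>m 1 m) (0\<^sub>m m 1) V"
  define E where "E = Matrix.mat 1 1 (\<lambda>_. e)"
  define lam where "lam = (\<lambda>i. if i = 0 then e else lam3 (i - 1))"
  have Pc: "P \<in> carrier_mat (Suc m) (Suc m)" unfolding P_def using V by auto
  have PT: "transpose_mat P = four_block_mat (1\<^sub>m 1) (0\<^sub>m 1 m) (0\<^sub>m m 1) (transpose_mat V)"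
    unfolding P_def using V by (subst transpose_four_block_mat) auto
  have VT: "transpose_mat V \<in> carrier_mat m m" using V by auto
  have diag: "mat_diag (Suc m) lam = four_block_mat E (0\<^sub>m 1 m) (0\<^sub>m m 1) (mat_diag m lam3)"
    by (rule eq_matI) (auto simp: E_def lam_def mat_diag_def)
  have PTP: "transpose_mat P * P = 1\<^sub>m (Suc m)"
    unfolding PT unfolding P_def using V VT
    by (subst mult_four_block_mat[OF one_carrier_mat zero_carrier_mat zero_carrier_mat VT
      one_carrier_mat zero_carrier_mat zero_carrier_mat V(1)]) 
       (use V in \<open>auto simp: four_block_one_mat[of 1 m, simplified]\<close>)
  have mid: "P * mat_diag (Suc m) lam * transpose_mat P = A'"
  proof -
    have D3: "mat_diag m lam3 \<in> carrier_mat m m" by simp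
    have E: "E \<in> carrier_mat 1 1" unfolding E_def by simp
    have VD: "V * mat_diag m lam3 \<in> carrier_mat m m" using V by auto
    have 1: "P * mat_diag (Suc m) lam = four_block_mat E (0\<^sub>m 1 m) (0\<^sub>m m 1) (V * mat_diag m lam3)"
      unfolding diag P_def
      by (subst mult_four_block_mat[OF one_carrier_mat zero_carrier_mat zero_carrier_mat V(1)
      E zero_carrier_mat zero_carrier_mat D3]) (use V E D3 in \<open>auto simp: left_mult_zero_mat[OF D3]\<close>)
    have "P * mat_diag (Suc m) lam * transpose_mat P =
      four_block_mat E (0\<^sub>m 1 m) (0\<^sub>m m 1) (V * mat_diag m lam3 * transpose_mat V)"
      unfolding 1 PT
      by (subst mult_four_block_mat[OF E zero_carrier_mat zero_carrier_mat VD
      one_carrier_mat zero_carrier_mat zero_carrier_mat VT]) (use V E VD VT in \<open>auto simp: right_mult_zero_mat[OF VD] left_add_zero_mat[OF VD] left_add_zero_mat[of _ m "Suc 0"] mult_carrier_mat[OF VD VT]\<close>)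
    also have "\<dots> = A'" unfolding V(3)[symmetric]
      by (rule eq_matI) (use A'c A'col A'row in \<open>auto simp: E_def A3_def\<close>)
    finally show ?thesis .
  qed
  define U where "U = W * P"
  have Uc: "U \<in> carrier_mat (Suc m) (Suc m)" unfolding U_def using W Pc by auto
  have Dc: "mat_diag (Suc m) lam \<in> carrier_mat (Suc m) (Suc m)" by simp
  have PTc: "transpose_mat P \<in> carrier_mat (Suc m) (Suc m)" using Pc by auto
  have "transpose_mat U * U = (transpose_mat P * transpose_mat W) * (W * P)"
    unfolding U_def using transpose_mult[OF W(1) Pc] by simp
  also have "\<dots> = transpose_mat P * (transpose_mat W * (W * P))"
    using assoc_mult_mat[OF PTc WT, of "W * P" "Suc m"] W(1) Pc by auto
  also have "transpose_mat W * (W * P) = (transpose_mat W * W) * P"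
    using assoc_mult_mat[OF WT W(1) Pc] by simp
  also have "\<dots> = P" using W(2) Pc by simp
  finally have UTU: "transpose_mat U * U = 1\<^sub>m (Suc m)" using PTP by simp
  have "U * mat_diag (Suc m) lam * transpose_mat U = W * (P * mat_diag (Suc m) lam * transpose_mat P) * transpose_mat W"
    unfolding U_def using W Pc WT PTc Dc by (simp add: transpose_mult sq_assoc[of _ "Suc m"] sq_mult_carrier)
  also have "\<dots> = (W * transpose_mat W) * A * (W * transpose_mat W)"
    unfolding mid A'_def using W WT A PTc Dc by (simp add: sq_assoc[of _ "Suc m"] sq_mult_carrier)
  also have "\<dots> = A" using WWT A by simp
  finally show ?case using Uc UTU by metis
qed




definition DM :: "nat \<Rightarrow> real mat \<Rightarrow> (nat \<Rightarrow> real) \<Rightarrow> real mat" where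
  "DM n U f = U * mat_diag n f * transpose_mat U"

lemma mat_diag_carrier[simp]: "mat_diag n f \<in> carrier_mat n n"
  by (auto simp: mat_diag_def)

lemma DM_carrier[simp]: "U \<in> carrier_mat n n \<Longrightarrow> DM n U f \<in> carrier_mat n n"
  unfolding DM_def by auto

lemma orth_right: fixes U :: "real mat" assumes "U \<in> carrier_mat n n" "transpose_mat U * U = 1\<^sub>m n"
  shows "U * transpose_mat U = 1\<^sub>m n"
proof -
  have "transpose_mat U \<in> carrier_mat n n" using assms by auto
  from mat_mult_left_right_inverse[OF this assms(1) assms(2)] show ?thesis .
qed

lemma sq_add_mult: fixes A :: "real mat" shows "A \<in> carrier_mat n n \<Longrightarrow> B \<in> carrier_mat n n \<Longrightarrow> C \<in> carrier_mat n n \<Longrightarrow>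
  (A + B) * C = A * C + B * C" by (rule add_mult_distrib_mat) auto
lemma sq_mult_add: fixes A :: "real mat" shows "A \<in> carrier_mat n n \<Longrightarrow> B \<in> carrier_mat n n \<Longrightarrow> C \<in> carrier_mat n n \<Longrightarrow>
  A * (B + C) = A * B + A * C" by (rule mult_add_distrib_mat) auto
lemma sq_minus_mult: fixes A :: "real mat" shows "A \<in> carrier_mat n n \<Longrightarrow> B \<in> carrier_mat n n \<Longrightarrow> C \<in> carrier_mat n n \<Longrightarrow>
  (A - B) * C = A * C - B * C" by (rule minus_mult_distrib_mat) auto
lemma sq_mult_minus: fixes A :: "real mat" shows "A \<in> carrier_mat n n \<Longrightarrow> B \<in> carrier_mat n n \<Longrightarrow> C \<in> carrier_mat n n \<Longrightarrow>
  A * (B - C) = A * B - A * C" by (rule mult_minus_distrib_mat) auto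
lemma sq_smult_mult: fixes A :: "real mat" shows "A \<in> carrier_mat n n \<Longrightarrow> B \<in> carrier_mat n n \<Longrightarrow>
  (k \<cdot>\<^sub>m A) * B = k \<cdot>\<^sub>m (A * B)" by (rule mult_smult_assoc_mat) auto
lemma sq_mult_smult: fixes A :: "real mat" shows "A \<in> carrier_mat n n \<Longrightarrow> B \<in> carrier_mat n n \<Longrightarrow>
  A * (k \<cdot>\<^sub>m B) = k \<cdot>\<^sub>m (A * B)" by (rule mult_smult_distrib) auto

lemma DM_cong: "(\<And>i. i < n \<Longrightarrow> f i = g i) \<Longrightarrow> DM n U f = DM n U g"
proof -
  assume "\<And>i. i < n \<Longrightarrow> f i = g i"
  hence "mat_diag n f = mat_diag n g" by (intro eq_matI) (auto simp: mat_diag_def)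
  thus ?thesis unfolding DM_def by simp
qed

lemma DM_mult:
  assumes U: "U \<in> carrier_mat n n" "transpose_mat U * U = 1\<^sub>m n"
  shows "DM n U f * DM n U g = DM n U (\<lambda>i. f i * g i)"
proof -
  have UT: "transpose_mat U \<in> carrier_mat n n" using U by auto
  have F: "mat_diag n f \<in> carrier_mat n n" "mat_diag n g \<in> carrier_mat n n" by auto
  have "DM n U f * DM n U g = U * mat_diag n f * (transpose_mat U * U) * mat_diag n g * transpose_mat U"
    unfolding DM_def using U(1) UT F by (simp add: sq_assoc[of _ n] sq_mult_carrier)
  also have "\<dots> = U * (mat_diag n f * mat_diag n g) * transpose_mat U"
    unfolding U(2) using U(1) UT F by (simp add: sq_assoc[of _ n] sq_mult_carrier left_mult_one_mat[of _ n n])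
  finally show ?thesis unfolding DM_def mat_diag_diag .
qed

lemma DM_add:
  assumes U: "U \<in> carrier_mat n n"
  shows "DM n U f + DM n U g = DM n U (\<lambda>i. f i + g i)"
proof -
  have UT: "transpose_mat U \<in> carrier_mat n n" using U by auto
  have F: "mat_diag n f \<in> carrier_mat n n" "mat_diag n g \<in> carrier_mat n n" by auto
  have "mat_diag n f + mat_diag n g = mat_diag n (\<lambda>i. f i + g i)"
    by (intro eq_matI) (auto simp: mat_diag_def)
  moreover have "DM n U f + DM n U g = U * (mat_diag n f + mat_diag n g) * transpose_mat U"
    unfolding DM_def using U UT F
    by (simp add: sq_add_mult[of _ n] sq_mult_add[of _ n] sq_mult_carrier)
  ultimately show ?thesis unfolding DM_def by simp
qed

lemma DM_minus:
  assumes U: "U \<in> carrier_mat n n"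
  shows "DM n U f - DM n U g = DM n U (\<lambda>i. f i - g i)"
proof -
  have UT: "transpose_mat U \<in> carrier_mat n n" using U by auto
  have F: "mat_diag n f \<in> carrier_mat n n" "mat_diag n g \<in> carrier_mat n n" by auto
  have "mat_diag n f - mat_diag n g = mat_diag n (\<lambda>i. f i - g i)"
    by (intro eq_matI) (auto simp: mat_diag_def)
  moreover have "DM n U f - DM n U g = U * (mat_diag n f - mat_diag n g) * transpose_mat U"
    unfolding DM_def using U UT F
    by (simp add: sq_minus_mult[of _ n] sq_mult_minus[of _ n] sq_mult_carrier)
  ultimately show ?thesis unfolding DM_def by simp
qed

lemma DM_smult:
  assumes U: "U \<in> carrier_mat n n"
  shows "c \<cdot>\<^sub>m DM n U f = DM n U (\<lambda>i. c * f i)"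
proof -
  have UT: "transpose_mat U \<in> carrier_mat n n" using U by auto
  have "c \<cdot>\<^sub>m mat_diag n f = mat_diag n (\<lambda>i. c * f i)"
    by (intro eq_matI) (auto simp: mat_diag_def)
  moreover have "c \<cdot>\<^sub>m DM n U f = U * (c \<cdot>\<^sub>m mat_diag n f) * transpose_mat U"
    unfolding DM_def using U UT
    by (simp add: sq_smult_mult[of _ n] sq_mult_smult[of _ n] sq_mult_carrier)
  ultimately show ?thesis unfolding DM_def by simp
qed

lemma DM_one:
  assumes U: "U \<in> carrier_mat n n" "transpose_mat U * U = 1\<^sub>m n"
  shows "1\<^sub>m n = DM n U (\<lambda>i. 1)"
proof -
  have "mat_diag n (\<lambda>i. 1) = 1\<^sub>m n" by (intro eq_matI) (auto simp: mat_diag_def)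
  thus ?thesis unfolding DM_def using orth_right[OF U] U by simp
qed

lemma DM_zero:
  assumes U: "U \<in> carrier_mat n n"
  shows "0\<^sub>m n n = DM n U (\<lambda>i. 0)"
proof -
  have "mat_diag n (\<lambda>i. 0::real) = 0\<^sub>m n n" by (intro eq_matI) (auto simp: mat_diag_def)
  hence "DM n U (\<lambda>i. 0) = U * 0\<^sub>m n n * transpose_mat U" unfolding DM_def by simp
  also have "\<dots> = 0\<^sub>m n n"
    using right_mult_zero_mat[OF U, of n] left_mult_zero_mat[OF transpose_carrier_mat[THEN iffD2, OF U], of n]
    by simp
  finally show ?thesis by simp
qed

lemma poly_mat_0: "M \<in> carrier_mat n n \<Longrightarrow> poly_mat 0 M = 0\<^sub>m n n"
  unfolding poly_mat_def by simp

lemma poly_mat_pCons: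
  assumes M: "M \<in> carrier_mat n n"
  shows "poly_mat (pCons a p) M = a \<cdot>\<^sub>m 1\<^sub>m n + M * poly_mat p M"
proof (cases "a = 0 \<and> p = 0")
  case True
  thus ?thesis using M unfolding poly_mat_def by (auto intro!: eq_matI)
next
  case False
  hence "coeffs (pCons a p) = a # coeffs p" by (auto simp: coeffs_pCons_eq_cCons cCons_def)
  thus ?thesis using M unfolding poly_mat_def by simp
qed

lemma poly_mat_DM:
  assumes U: "U \<in> carrier_mat n n" "transpose_mat U * U = 1\<^sub>m n"
  shows "poly_mat q (DM n U f) = DM n U (\<lambda>i. poly q (f i))"
proof (induction q)
  case 0
  show ?case using poly_mat_0[of "DM n U f" n] DM_zero[OF U(1)] U by simp
next
  case (pCons a p)
  have "poly_mat (pCons a p) (DM n U f) = a \<cdot>\<^sub>m 1\<^sub>m n + DM n U f * poly_mat p (DM n U f)"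
    using poly_mat_pCons[of "DM n U f" n] U by simp
  also have "\<dots> = DM n U (\<lambda>i. a + f i * poly p (f i))"
    unfolding pCons.IH DM_mult[OF U] unfolding DM_one[OF U] DM_smult[OF U(1)] DM_add[OF U(1)]
    by simp
  finally show ?case by simp
qed

lemma interpolation:
  fixes g :: "real \<Rightarrow> real"
  assumes "finite S"
  shows "\<exists>q. \<forall>x\<in>S. poly q x = g x"
  using assms
proof (induction S rule: finite_induct)
  case empty thus ?case by auto
next
  case (insert a S)
  then obtain q where q: "\<forall>x\<in>S. poly q x = g x" by auto
  define P where "P = (\<Prod>s\<in>S. [:-s, 1:])"
  have P0: "\<forall>x\<in>S. poly P x = 0" unfolding P_def using insert(1)
    by (auto simp: poly_prod_0)
  have Pa: "poly P a \<noteq> 0" unfolding P_def using insert(1,2) by (auto simp: poly_prod_0)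
  define q' where "q' = q + Polynomial.smult ((g a - poly q a) / poly P a) P"
  have "\<forall>x\<in>insert a S. poly q' x = g x"
    unfolding q'_def using q P0 Pa by auto
  thus ?case by blast
qed

lemma mat_powr_DM:
  assumes U: "U \<in> carrier_mat n n" "transpose_mat U * U = 1\<^sub>m n"
  shows "mat_powr (DM n U f) p = DM n U (\<lambda>i. f i powr p)"
proof -
  have dim: "dim_row (DM n U f) = n" using DM_carrier[OF U(1), of f] by (simp only: carrier_matD)
  define Q where "Q = (\<lambda>R. \<exists>U' lam. U' \<in> carrier_mat n n \<and> transpose_mat U' * U' = 1\<^sub>m n \<and>
        DM n U f = U' * mat_diag n lam * transpose_mat U' \<and>
        R = U' * mat_diag n (\<lambda>i. lam i powr p) * transpose_mat U')"
  have ex: "Q (DM n U (\<lambda>i. f i powr p))" unfolding Q_def DM_def using U by blast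
  have uniq: "R = DM n U (\<lambda>i. f i powr p)" if "Q R" for R
  proof -
    from that obtain U' lam where U': "U' \<in> carrier_mat n n" "transpose_mat U' * U' = 1\<^sub>m n"
      and eq: "DM n U f = DM n U' lam" and R: "R = DM n U' (\<lambda>i. lam i powr p)"
      unfolding Q_def DM_def by auto
    obtain q where q: "\<forall>x\<in>f ` {..<n} \<union> lam ` {..<n}. poly q x = x powr p"
      using interpolation[of "f ` {..<n} \<union> lam ` {..<n}" "\<lambda>x. x powr p"] by auto
    have "DM n U (\<lambda>i. f i powr p) = DM n U (\<lambda>i. poly q (f i))"
      using q by (intro DM_cong) auto
    also have "\<dots> = poly_mat q (DM n U f)" using poly_mat_DM[OF U] by simp
    also have "\<dots> = poly_mat q (DM n U' lam)" using eq by simp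
    also have "\<dots> = DM n U' (\<lambda>i. poly q (lam i))" using poly_mat_DM[OF U'] by simp
    also have "\<dots> = R" unfolding R using q by (intro DM_cong) auto
    finally show ?thesis by simp
  qed
  have "mat_powr (DM n U f) p = (SOME R. Q R)" unfolding mat_powr_def Let_def dim Q_def ..
  also have "\<dots> = DM n U (\<lambda>i. f i powr p)" using someI[of Q, OF ex] uniq by blast
  finally show ?thesis .
qed

lemma ifm: "(if P then a else (0::real)) * b = (if P then a * b else 0)" by simp

lemma loewner_ge_DM:
  assumes U: "U \<in> carrier_mat n n" "transpose_mat U * U = 1\<^sub>m n"
    and le: "\<And>i. i < n \<Longrightarrow> g i \<le> f i"
  shows "loewner_ge (DM n U f) (DM n U g)"
  unfolding loewner_ge_def
proof
  fix v :: "real Matrix.vec" assume "v \<in> carrier_vec (dim_row (DM n U f))"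
  hence v: "v \<in> carrier_vec n" using DM_carrier[OF U(1), of f] by (simp add: carrier_matD)
  have UT: "transpose_mat U \<in> carrier_mat n n" using U by auto
  define w where "w = transpose_mat U *\<^sub>v v"
  have w: "w \<in> carrier_vec n" unfolding w_def using UT v by auto
  define d where "d = (\<lambda>i. f i - g i)"
  have UD: "U * mat_diag n d \<in> carrier_mat n n" using U by auto
  have e1: "DM n U d *\<^sub>v v = (U * mat_diag n d) *\<^sub>v (transpose_mat U *\<^sub>v v)"
    unfolding DM_def using assoc_mult_mat_vec[OF UD UT v] .
  have e2: "(U * mat_diag n d) *\<^sub>v (transpose_mat U *\<^sub>v v) = U *\<^sub>v (mat_diag n d *\<^sub>v w)"
    unfolding w_def[symmetric] using assoc_mult_mat_vec[OF U(1) mat_diag_carrier w] by simp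
  have "v \<bullet> ((DM n U f - DM n U g) *\<^sub>v v) = v \<bullet> (DM n U d *\<^sub>v v)"
    using DM_minus[OF U(1), of f g] unfolding d_def by simp
  also have "\<dots> = v \<bullet> (U *\<^sub>v (mat_diag n d *\<^sub>v w))" unfolding e1 e2 ..
  also have "\<dots> = w \<bullet> (mat_diag n d *\<^sub>v w)"
  proof -
    have xc: "mat_diag n d *\<^sub>v w \<in> carrier_vec n" using mult_mat_vec_carrier[OF mat_diag_carrier w] .
    have e3: "(transpose_mat U *\<^sub>v v) \<bullet> (mat_diag n d *\<^sub>v w) = v \<bullet> (U *\<^sub>v (mat_diag n d *\<^sub>v w))"
      by (rule transpose_vec_mult_scalar[OF U(1) xc v])
    thus ?thesis unfolding w_def[symmetric] by simp
  qed
  also have "\<dots> = (\<Sum>i<n. d i * (w $ i)^2)"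
    using w by (auto simp: scalar_prod_def mat_diag_def lessThan_atLeast0 power2_eq_square ifm
      intro!: sum.cong)
  also have "\<dots> \<ge> 0" using le unfolding d_def by (intro sum_nonneg) auto
  finally show "0 \<le> v \<bullet> ((DM n U f - DM n U g) *\<^sub>v v)" .
qed




lemma eig_bound:
  fixes X U :: "real mat"
  assumes U: "U \<in> carrier_mat n n" "transpose_mat U * U = 1\<^sub>m n"
    and X: "X = DM n U lam" and rho: "spectral_radius (map_mat complex_of_real X) < 1"
    and i: "i < n"
  shows "\<bar>lam i\<bar> < 1"
proof -
  have Xc: "X \<in> carrier_mat n n" using X U by simp
  have UT: "transpose_mat U \<in> carrier_mat n n" using U by auto
  define v where "v = col U i"
  have v: "v \<in> carrier_vec n" unfolding v_def using U i by auto
  have "v \<bullet> v = (transpose_mat U * U) $$ (i,i)" unfolding v_def using U(1) i by simp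
  hence vv: "v \<bullet> v = 1" using U(2) i by simp
  hence v0: "v \<noteq> 0\<^sub>v n" by auto
  have XU: "X * U = U * mat_diag n lam"
  proof -
    have "X * U = U * mat_diag n lam * (transpose_mat U * U)" unfolding X DM_def
      using U(1) UT by (simp add: sq_assoc[of _ n] sq_mult_carrier)
    thus ?thesis using right_mult_one_mat[of "U * mat_diag n lam" n n] U by simp
  qed
  have "X *\<^sub>v v = col (X * U) i" unfolding v_def using col_mult2[OF Xc U(1) i] by simp
  also have "\<dots> = lam i \<cdot>\<^sub>v v" unfolding XU mat_diag_mult_right[OF U(1)] v_def
    using U(1) i by (intro eq_vecI) auto
  finally have ev: "X *\<^sub>v v = lam i \<cdot>\<^sub>v v" .
  have "eigenvalue X (lam i)" unfolding eigenvalue_def eigenvector_def using Xc v v0 ev by auto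
  hence "poly (char_poly X) (lam i) = 0" using eigenvalue_root_char_poly[OF Xc] by auto
  moreover have "char_poly (map_mat complex_of_real X) = map_poly of_real (char_poly X)"
    using of_real_hom.char_poly_hom[OF Xc] by simp
  ultimately have "poly (char_poly (map_mat complex_of_real X)) (of_real (lam i)) = 0" by simp
  moreover have Cc: "map_mat complex_of_real X \<in> carrier_mat n n" using Xc by auto
  ultimately have "eigenvalue (map_mat complex_of_real X) (of_real (lam i))"
    using eigenvalue_root_char_poly[OF Cc] by auto
  hence "of_real (lam i) \<in> spectrum (map_mat complex_of_real X)" unfolding spectrum_def by auto
  hence "norm (complex_of_real (lam i)) \<le> spectral_radius (map_mat complex_of_real X)"
  proof -
    have "n > 0" using i by simp
    from spectral_radius_mem_max(2)[OF Cc this] show ?thesis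
      using \<open>of_real (lam i) \<in> spectrum (map_mat complex_of_real X)\<close> by blast
  qed
  thus ?thesis using rho by simp
qed




lemma gchoose_bound:
  fixes a :: real
  assumes "\<bar>a\<bar> \<le> 1"
  shows "\<bar>a gchoose k\<bar> \<le> 1"
proof (induction k)
  case 0 thus ?case by simp
next
  case (Suc k)
  have eq: "(a gchoose Suc k) = (a - of_nat k) * (a gchoose k) / of_nat (Suc k)"
    using gbinomial_mult_1[of a k] by (simp add: field_simps)
  have "\<bar>a - of_nat k\<bar> \<le> of_nat (Suc k)" using assms by auto
  hence "\<bar>(a - of_nat k) * (a gchoose k)\<bar> \<le> of_nat (Suc k)"
    using Suc.IH by (simp add: abs_mult mult_le_one mult_mono' order_trans[OF mult_right_le_one_le] )
  thus ?case unfolding eq by (simp add: abs_div)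
qed

lemma tail_bound:
  fixes a z :: real
  assumes a: "\<bar>a\<bar> \<le> 1" and z: "\<bar>z\<bar> \<le> 1/2"
  shows "\<bar>(1 + z) powr a - (\<Sum>k<N. (a gchoose k) * z ^ k)\<bar> \<le> 2 * (1/2)^N"
proof -
  define f where "f = (\<lambda>k. (a gchoose k) * z ^ k)"
  have "\<bar>z\<bar> < 1" using z by simp
  from sums_split_initial_segment[OF gen_binomial_real[OF this, of a], of N]
  have s1: "(\<lambda>k. f (k + N)) sums ((1 + z) powr a - (\<Sum>k<N. f k))" unfolding f_def .
  have g: "(\<lambda>k. (1/2)^N * (1/2)^k) sums ((1/2::real)^N * 2)"
    using sums_mult[OF geometric_sums[of "1/2::real"], of "(1/2)^N"] by simp
  have fb: "\<bar>f k\<bar> \<le> (1/2)^k" for k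
  proof -
    have "\<bar>f k\<bar> = \<bar>a gchoose k\<bar> * \<bar>z\<bar>^k" unfolding f_def by (simp add: abs_mult power_abs)
    also have "\<dots> \<le> 1 * (1/2)^k"
      using gchoose_bound[OF a, of k] z by (intro mult_mono power_mono) auto
    finally show ?thesis by simp
  qed
  have b1: "f (k + N) \<le> (1/2)^N * (1/2)^k" for k
    using fb[of "k+N"] by (simp add: power_add mult.commute)
  have b2: "- f (k + N) \<le> (1/2)^N * (1/2)^k" for k
    using fb[of "k+N"] by (simp add: power_add mult.commute)
  have "(1 + z) powr a - (\<Sum>k<N. f k) \<le> (1/2)^N * 2"
    using sums_le[OF _ s1 g] b1 by blast
  moreover have "-((1 + z) powr a - (\<Sum>k<N. f k)) \<le> (1/2)^N * 2"
    using sums_le[OF _ sums_minus[OF s1] g] b2 by blast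
  ultimately show ?thesis unfolding f_def by (simp add: abs_le_iff mult.commute)
qed




lemma scalar_bounds:
  fixes r e :: real
  assumes e: "0 < e" "e \<le> 1" and s: "\<bar>r - 1\<bar> \<le> e / 4"
  shows "exp (- e) \<le> r^2 \<and> r^2 \<le> exp e"
proof
  define s where "s = \<bar>r - 1\<bar>"
  have s0: "0 \<le> s" "s \<le> e/4" using s unfolding s_def by auto
  have "\<bar>r\<bar> \<le> 1 + s" unfolding s_def by linarith
  hence "r^2 \<le> (1 + s)^2" by (metis abs_ge_zero power2_abs power_mono)
  also have "\<dots> = 1 + 2 * s + s * s" by (simp add: power2_eq_square algebra_simps)
  also have "\<dots> \<le> 1 + 3 * s" using s0 e mult_right_le_one_le[of s s] by linarith
  also have "\<dots> \<le> 1 + e" using s0 by linarith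
  also have "\<dots> \<le> exp e" by (rule exp_ge_add_one_self)
  finally show "r^2 \<le> exp e" .
  have r1: "1 - s \<le> r" unfolding s_def by linarith
  have "0 \<le> 1 - s" using s0 e by linarith
  have "1 - 2 * s \<le> (1 - s)^2" by (simp add: power2_eq_square algebra_simps)
  also have "(1 - s)^2 \<le> r^2" using r1 \<open>0 \<le> 1 - s\<close> by (rule power_mono)
  finally have lo: "1 - e/2 \<le> r^2" using s0 by linarith
  have "exp (-e) = 1 / exp e" by (simp add: exp_minus field_simps)
  also have "\<dots> \<le> 1 / (1 + e)" using e exp_ge_add_one_self[of e]
    by (intro divide_left_mono) auto
  also have "\<dots> \<le> 1 - e/2"
  proof -
    have "1 \<le> (1 - e/2) * (1 + e)" using e mult_right_le_one_le[of e e]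
      by (simp add: algebra_simps)
    thus ?thesis using e by (simp add: divide_le_eq)
  qed
  finally show "exp (-e) \<le> r^2" using lo by linarith
qed

lemma core:
  fixes p \<epsilon> :: real
  assumes \<epsilon>: "\<epsilon> > 0" and p: "-1 \<le> p" "p \<le> 1"
  shows "\<exists>T::real poly. real (degree T) \<le> 8 * max 1 (ln (1/\<epsilon>)) \<and>
    (\<forall>y. \<bar>y - 1\<bar> < 1/2 \<longrightarrow> exp (-\<epsilon>) \<le> (poly T y)^2 * y powr p \<and> (poly T y)^2 * y powr p \<le> exp \<epsilon>)"
proof -
  define a where "a = -p/2"
  have a: "\<bar>a\<bar> \<le> 1" "\<bar>a\<bar> \<le> 1/2" unfolding a_def using p by auto
  define e where "e = min \<epsilon> 1"
  have e: "0 < e" "e \<le> 1" "e \<le> \<epsilon>" unfolding e_def using \<epsilon> by auto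
  define L where "L = ln (1/e)"
  have L0: "0 \<le> L" unfolding L_def using e by simp
  have LM: "L \<le> max 1 (ln (1/\<epsilon>))"
  proof (cases "\<epsilon> \<le> 1")
    case True thus ?thesis unfolding L_def e_def by simp
  next
    case False thus ?thesis unfolding L_def e_def by simp
  qed
  define c where "c = nat \<lceil>L\<rceil>"
  have c1: "real c \<le> L + 1" unfolding c_def using L0 by linarith
  have c2: "L \<le> real c" unfolding c_def using L0 by linarith
  define N where "N = 4 + 2 * c"
  define T where "T = (\<Sum>k<N. Polynomial.smult (a gchoose k) ([:-1,1:]^k))"
  have degT: "degree T \<le> N" unfolding T_def
  proof (rule degree_sum_le)
    fix k assume "k \<in> {..<N}"
    have "degree (Polynomial.smult (a gchoose k) ([:-1,1:]^k)) \<le> degree (([:-1,1:]::real poly)^k)"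
      by (rule degree_smult_le)
    also have "\<dots> \<le> k * degree ([:-1,1:]::real poly)" by (metis degree_power_le mult.commute)
    also have "\<dots> \<le> N" using \<open>k \<in> {..<N}\<close> by simp
    finally show "degree (Polynomial.smult (a gchoose k) ([:-1,1:]^k)) \<le> N" .
  qed simp
  have degR: "real (degree T) \<le> 8 * max 1 (ln (1/\<epsilon>))"
  proof -
    have "real (degree T) \<le> real N" using degT by simp
    also have "\<dots> = 4 + 2 * real c" unfolding N_def by simp
    also have "\<dots> \<le> 6 + 2 * max 1 (ln (1/\<epsilon>))" using c1 LM by linarith
    also have "\<dots> \<le> 8 * max 1 (ln (1/\<epsilon>))" by linarith
    finally show ?thesis .
  qed
  have polyT: "poly T y = (\<Sum>k<N. (a gchoose k) * (y - 1)^k)" for y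
    unfolding T_def by (simp add: poly_sum)
  have pow: "16 / e \<le> (2::real)^N"
  proof -
    have "(2::real)^N = 16 * 4^c" unfolding N_def by (simp add: power_add power_mult)
    moreover have "exp (real c) \<le> 4^c"
    proof -
      have "exp (real c) = exp 1 ^ c" by (simp add: exp_of_nat_mult[symmetric])
      also have "\<dots> \<le> 4^c" using exp_le by (intro power_mono) auto
      finally show ?thesis .
    qed
    moreover have "1 / e \<le> exp (real c)"
    proof -
      have "1 / e = exp L" unfolding L_def using e by simp
      also have "\<dots> \<le> exp (real c)" using c2 by simp
      finally show ?thesis .
    qed
    ultimately have "1 / e \<le> 4^c" "(2::real)^N = 16 * 4^c" by auto
    thus ?thesis by (simp add: divide_le_eq)
  qed
  have eta: "2 * (1/2::real)^N \<le> e / 8"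
  proof -
    have "(1/2::real)^N = 1 / 2^N" by (simp add: power_one_over)
    also have "\<dots> \<le> e / 16" using pow e by (simp add: field_simps)
    finally show ?thesis by simp
  qed
  show ?thesis
  proof (intro exI conjI allI impI)
    show "real (degree T) \<le> 8 * max 1 (ln (1/\<epsilon>))" by (rule degR)
    fix y :: real assume y: "\<bar>y - 1\<bar> < 1/2"
    have yb: "1/2 < y" "y < 3/2" using y abs_less_iff[of "y - 1" "1/2"] by linarith+
    have y0: "y > 0" using yb by linarith
    define g where "g = y powr a"
    have g: "g \<ge> 1/2"
    proof -
      have "ln y \<le> ln 2" using yb y0 by simp
      moreover have "- ln 2 \<le> ln y"
      proof -
        have "ln (1/2) \<le> ln y" using yb y0 by simp
        thus ?thesis by (simp add: ln_div)
      qed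
      moreover have "ln 2 \<ge> (0::real)" by simp
      ultimately have ly: "\<bar>ln y\<bar> \<le> ln 2" by (simp add: abs_le_iff)
      have "\<bar>a * ln y\<bar> = \<bar>a\<bar> * \<bar>ln y\<bar>" by (simp add: abs_mult)
      also have "\<dots> \<le> 1 * ln 2" using a(1) ly by (intro mult_mono) auto
      finally have "\<bar>a * ln y\<bar> \<le> ln 2" by simp
      hence "- ln 2 \<le> a * ln y" by linarith
      hence "exp (- ln 2) \<le> exp (a * ln y)" by simp
      thus ?thesis unfolding g_def powr_def using y0 by (simp add: exp_minus)
    qed
    have tail: "\<bar>g - poly T y\<bar> \<le> e / 8"
      using tail_bound[OF a(1), of "y - 1" N] y eta unfolding polyT g_def by simp
    define r where "r = poly T y / g"
    have gpos: "g > 0" using g by simp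
    have Tr: "poly T y = r * g" unfolding r_def using gpos by simp
    have "\<bar>r - 1\<bar> = \<bar>poly T y - g\<bar> / g" unfolding r_def using gpos
      by (simp add: field_simps abs_div)
    also have "\<dots> \<le> (e/8) / (1/2)" using tail g gpos e
      by (intro frac_le) (auto simp: abs_minus_commute)
    finally have rs: "\<bar>r - 1\<bar> \<le> e / 4" by simp
    have gg: "g^2 * y powr p = 1"
    proof -
      have "y powr (a + a + p) = y powr a * y powr a * y powr p" by (simp only: powr_add)
      hence "g^2 * y powr p = y powr (a + a + p)" unfolding g_def
        by (simp add: power2_eq_square)
      also have "a + a + p = 0" unfolding a_def by simp
      finally show ?thesis using y0 by simp
    qed
    have eq: "(poly T y)^2 * y powr p = r^2" unfolding Tr using gg
      by (simp add: power_mult_distrib mult.assoc)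
    from scalar_bounds[OF e(1) e(2) rs]
    have "exp (-e) \<le> r^2" "r^2 \<le> exp e" by auto
    moreover have "exp (-\<epsilon>) \<le> exp (-e)" "exp e \<le> exp \<epsilon>" using e by auto
    ultimately show "exp (-\<epsilon>) \<le> (poly T y)^2 * y powr p" "(poly T y)^2 * y powr p \<le> exp \<epsilon>"
      unfolding eq by linarith+
  qed
qed




theorem mainTheorem5:
  shows "\<exists>K::real. \<forall>(n::nat) (X::real mat) (p::real) (\<epsilon>::real).
    X \<in> carrier_mat n n \<and> transpose_mat X = X \<and>
    spectral_radius (map_mat complex_of_real X) < 1 \<and>
    -1 \<le> p \<and> p \<le> 1 \<and> \<epsilon> > 0 \<longrightarrow>
    (\<exists>T::real poly. real (degree T) \<le> K * max 1 (ln (1 / \<epsilon>)) \<and>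
       loewner_approx \<epsilon> (mat_powr (1\<^sub>m n - X) p)
         (poly_mat T (1\<^sub>m n + (1/2) \<cdot>\<^sub>m X) *
          mat_powr (1\<^sub>m n - (1/2) \<cdot>\<^sub>m X - (1/2) \<cdot>\<^sub>m (X * X)) p *
          poly_mat T (1\<^sub>m n + (1/2) \<cdot>\<^sub>m X)))"
proof (rule exI[of _ 8], intro allI impI)
  fix n :: nat and X :: "real mat" and p \<epsilon> :: real
  assume H: "X \<in> carrier_mat n n \<and> transpose_mat X = X \<and>
    spectral_radius (map_mat complex_of_real X) < 1 \<and> -1 \<le> p \<and> p \<le> 1 \<and> \<epsilon> > 0"
  hence Xc: "X \<in> carrier_mat n n" and sym: "transpose_mat X = X"
    and rho: "spectral_radius (map_mat complex_of_real X) < 1"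
    and p: "-1 \<le> p" "p \<le> 1" and \<epsilon>: "\<epsilon> > 0" by auto
  obtain U lam where U: "U \<in> carrier_mat n n" "transpose_mat U * U = 1\<^sub>m n"
    and XU: "X = U * mat_diag n lam * transpose_mat U"
    using spectral_thm[OF Xc sym] by auto
  have X: "X = DM n U lam" unfolding DM_def using XU .
  have lb: "\<And>i. i < n \<Longrightarrow> \<bar>lam i\<bar> < 1" using eig_bound[OF U X rho] by auto
  obtain T where degT: "real (degree T) \<le> 8 * max 1 (ln (1/\<epsilon>))"
    and Tb: "\<And>y. \<bar>y - 1\<bar> < 1/2 \<Longrightarrow> exp (-\<epsilon>) \<le> (poly T y)^2 * y powr p \<and> (poly T y)^2 * y powr p \<le> exp \<epsilon>"
    using core[OF \<epsilon> p] by auto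
  have e1: "1\<^sub>m n - X = DM n U (\<lambda>i. 1 - lam i)"
    unfolding X DM_one[OF U] DM_minus[OF U(1)] ..
  have e2: "1\<^sub>m n + (1/2) \<cdot>\<^sub>m X = DM n U (\<lambda>i. 1 + 1/2 * lam i)"
    unfolding X DM_one[OF U] DM_smult[OF U(1)] DM_add[OF U(1)] ..
  have e3: "1\<^sub>m n - (1/2) \<cdot>\<^sub>m X - (1/2) \<cdot>\<^sub>m (X * X) =
      DM n U (\<lambda>i. 1 - 1/2 * lam i - 1/2 * (lam i * lam i))"
    unfolding X DM_mult[OF U] DM_one[OF U] DM_smult[OF U(1)] DM_minus[OF U(1)] ..
  define t where "t = (\<lambda>i. poly T (1 + 1/2 * lam i))"
  define A where "A = (\<lambda>i. (1 - lam i) powr p)"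
  define m where "m = (\<lambda>i. (1 - 1/2 * lam i - 1/2 * (lam i * lam i)) powr p)"
  have LA: "mat_powr (1\<^sub>m n - X) p = DM n U A" unfolding e1 A_def mat_powr_DM[OF U] ..
  have RB: "poly_mat T (1\<^sub>m n + (1/2) \<cdot>\<^sub>m X) *
          mat_powr (1\<^sub>m n - (1/2) \<cdot>\<^sub>m X - (1/2) \<cdot>\<^sub>m (X * X)) p *
          poly_mat T (1\<^sub>m n + (1/2) \<cdot>\<^sub>m X) = DM n U (\<lambda>i. t i * m i * t i)"
    unfolding e2 e3 poly_mat_DM[OF U] mat_powr_DM[OF U] DM_mult[OF U] t_def m_def ..
  have key: "exp (-\<epsilon>) * A i \<le> t i * m i * t i \<and> t i * m i * t i \<le> exp \<epsilon> * A i" if i: "i < n" for i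
  proof -
    define y where "y = 1 + 1/2 * lam i"
    have li: "\<bar>lam i\<bar> < 1" using lb[OF i] .
    have y1: "\<bar>y - 1\<bar> < 1/2" unfolding y_def using li by auto
    have ypos: "y > 0" unfolding y_def using li by auto
    have lpos: "1 - lam i > 0" using li by auto
    have "1 - 1/2 * lam i - 1/2 * (lam i * lam i) = (1 - lam i) * y"
      unfolding y_def by (simp add: field_simps)
    hence "m i = A i * y powr p" unfolding m_def A_def using ypos lpos by (simp add: powr_mult)
    hence tmt: "t i * m i * t i = A i * ((poly T y)^2 * y powr p)"
      unfolding t_def y_def by (simp add: power2_eq_square algebra_simps)
    have Apos: "A i > 0" unfolding A_def using lpos by simp
    from Tb[OF y1] have "exp (-\<epsilon>) \<le> (poly T y)^2 * y powr p" "(poly T y)^2 * y powr p \<le> exp \<epsilon>"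
      by auto
    thus ?thesis unfolding tmt using Apos
      by (auto simp: mult.commute intro: mult_left_mono)
  qed
  have LAP: "loewner_approx \<epsilon> (DM n U A) (DM n U (\<lambda>i. t i * m i * t i))"
    unfolding loewner_approx_def DM_smult[OF U(1)]
    using key by (auto intro!: loewner_ge_DM[OF U])
  show "\<exists>T::real poly. real (degree T) \<le> 8 * max 1 (ln (1 / \<epsilon>)) \<and>
       loewner_approx \<epsilon> (mat_powr (1\<^sub>m n - X) p)
         (poly_mat T (1\<^sub>m n + (1/2) \<cdot>\<^sub>m X) *
          mat_powr (1\<^sub>m n - (1/2) \<cdot>\<^sub>m X - (1/2) \<cdot>\<^sub>m (X * X)) p *
          poly_mat T (1\<^sub>m n + (1/2) \<cdot>\<^sub>m X))"
  proof (intro exI[of _ T] conjI)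
    show "real (degree T) \<le> 8 * max 1 (ln (1 / \<epsilon>))" using degT .
    show "loewner_approx \<epsilon> (mat_powr (1\<^sub>m n - X) p)
         (poly_mat T (1\<^sub>m n + (1/2) \<cdot>\<^sub>m X) *
          mat_powr (1\<^sub>m n - (1/2) \<cdot>\<^sub>m X - (1/2) \<cdot>\<^sub>m (X * X)) p *
          poly_mat T (1\<^sub>m n + (1/2) \<cdot>\<^sub>m X))" unfolding LA RB by fact
  qed
qed


end
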